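(* Let $G$ be a connected graph and let $(T,\mathcal X)$, $\mathcal X=\{X_t:t\in V(T)\}$, be a tree-cut decomposition of $G$ of finite adhesion whose parts are exactly the $\omega$-edge blocks of $G$ and such that for every edge $t_1t_2\in E(T)$ there is an edge of $G$ between $X_{t_1}$ and $X_{t_2}$. For a subgraph $C'$ of $T$ write $\bigcup C'=\bigcup_{t\in V(C')}X_t$. Then: (1) for every region $C'$ of $T$, the induced subgraph $G[\bigcup C']$ is a region of $G$; (2) for every region $C$ of $G$ there exist finitely many pairwise disjoint regions $C'_1,\dots,C'_n$ of $T$ such that $C=G[\bigcup C'_1\cup\dots\cup\bigcup C'_n]$.
   Context: Two vertices $x,y$ of $G$ are finitely separable if some finite set of edges separates them in $G$; the equivalence classes of the relation "not finitely separable" are the $\omega$-edge blocks of $G$. A tree-cut decomposition of $G$ is a pair $(T,\mathcal X)$ with $T$ a tree and $\mathcal X=\{X_t:t\in V(T)\}$ a partition of $V(G)$ into nonempty parts indexed by $V(T)$. For an edge $e=t_1t_2$ of $T$ with $T_1\ni t_1$, $T_2\ni t_2$ the components of $T-e$, its adhesion set is $X_e=E_G(\bigcup_{t\in T_1}X_t,\bigcup_{t\in T_2}X_t)$; finite adhesion means all $X_e$ are finite. A region of a graph $H$ is a connected induced subgraph $C$ with finite boundary $\partial C=\{xy\in E(H):x\in C,y\notin C\}$. *)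

theory Defs
  imports Main
begin

definition graph :: "'a set \<Rightarrow> 'a set set \<Rightarrow> bool" where
  "graph V E \<longleftrightarrow> (\<forall>e\<in>E. \<exists>x y. x \<in> V \<and> y \<in> V \<and> x \<noteq> y \<and> e = {x, y})"

definition adj_in :: "'a set \<Rightarrow> 'a set set \<Rightarrow> 'a \<Rightarrow> 'a \<Rightarrow> bool" where
  "adj_in S E x y \<longleftrightarrow> x \<in> S \<and> y \<in> S \<and> {x, y} \<in> E"

definition comp_of :: "'a set \<Rightarrow> 'a set set \<Rightarrow> 'a \<Rightarrow> 'a set" where
  "comp_of S E x = {y \<in> S. (adj_in S E)\<^sup>*\<^sup>* x y}"

definition connected_in :: "'a set set \<Rightarrow> 'a set \<Rightarrow> bool" where
  "connected_in E S \<longleftrightarrow> S \<noteq> {} \<and> (\<forall>x\<in>S. \<forall>y\<in>S. (adj_in S E)\<^sup>*\<^sup>* x y)"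

definition edges_between :: "'a set set \<Rightarrow> 'a set \<Rightarrow> 'a set \<Rightarrow> 'a set set" where
  "edges_between E A B = {e \<in> E. \<exists>x\<in>A. \<exists>y\<in>B. e = {x, y}}"

definition region :: "'a set \<Rightarrow> 'a set set \<Rightarrow> 'a set \<Rightarrow> bool" where
  "region V E C \<longleftrightarrow> C \<subseteq> V \<and> connected_in E C \<and> finite (edges_between E C (V - C))"

definition tree :: "'b set \<Rightarrow> 'b set set \<Rightarrow> bool" where
  "tree VT ET \<longleftrightarrow> graph VT ET \<and> connected_in ET VT \<and>
     (\<forall>t1 t2. {t1, t2} \<in> ET \<longrightarrow> t2 \<notin> comp_of VT (ET - {{t1, t2}}) t1)"

definition fin_separable :: "'a set \<Rightarrow> 'a set set \<Rightarrow> 'a \<Rightarrow> 'a \<Rightarrow> bool" where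
  "fin_separable V E x y \<longleftrightarrow> (\<exists>F. F \<subseteq> E \<and> finite F \<and> y \<notin> comp_of V (E - F) x)"

definition omega_edge_blocks :: "'a set \<Rightarrow> 'a set set \<Rightarrow> 'a set set" where
  "omega_edge_blocks V E = {{y \<in> V. \<not> fin_separable V E x y} | x. x \<in> V}"

definition tree_cut_decomposition ::
  "'a set \<Rightarrow> 'b set \<Rightarrow> 'b set set \<Rightarrow> ('b \<Rightarrow> 'a set) \<Rightarrow> bool" where
  "tree_cut_decomposition V VT ET X \<longleftrightarrow> tree VT ET \<and>
     (\<forall>t\<in>VT. X t \<noteq> {}) \<and>
     (\<forall>s\<in>VT. \<forall>t\<in>VT. s \<noteq> t \<longrightarrow> X s \<inter> X t = {}) \<and>
     (\<Union>t\<in>VT. X t) = V"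

definition adhesion ::
  "'a set set \<Rightarrow> 'b set \<Rightarrow> 'b set set \<Rightarrow> ('b \<Rightarrow> 'a set) \<Rightarrow> 'b \<Rightarrow> 'b \<Rightarrow> 'a set set" where
  "adhesion E VT ET X t1 t2 =
     edges_between E (\<Union>t\<in>comp_of VT (ET - {{t1, t2}}) t1. X t)
                     (\<Union>t\<in>comp_of VT (ET - {{t1, t2}}) t2. X t)"

definition finite_adhesion ::
  "'a set set \<Rightarrow> 'b set \<Rightarrow> 'b set set \<Rightarrow> ('b \<Rightarrow> 'a set) \<Rightarrow> bool" where
  "finite_adhesion E VT ET X \<longleftrightarrow>
     (\<forall>t1 t2. {t1, t2} \<in> ET \<longrightarrow> finite (adhesion E VT ET X t1 t2))"

end

theory Submission
  imports Defs
begin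

lemma adj_sym: "adj_in S E x y \<Longrightarrow> adj_in S E y x"
  by (auto simp: adj_in_def insert_commute)

lemma rtp_sym:
  assumes "(adj_in S E)\<^sup>*\<^sup>* a b" shows "(adj_in S E)\<^sup>*\<^sup>* b a"
  using assms
proof induction
  case base then show ?case by simp
next
  case (step b c)
  then show ?case by (meson adj_sym converse_rtranclp_into_rtranclp)
qed

lemma rtp_exit:
  assumes "R\<^sup>*\<^sup>* a b" "P a" "\<not> P b" shows "\<exists>x y. R x y \<and> P x \<and> \<not> P y"
  using assms by induction blast+

lemma stay:
  assumes "(adj_in V (E - F))\<^sup>*\<^sup>* a b" "a \<in> C" "edges_between E C (V - C) \<subseteq> F"
  shows "(adj_in C E)\<^sup>*\<^sup>* a b \<and> b \<in> C"
  using assms(1)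
proof induction
  case base then show ?case using assms(2) by simp
next
  case (step b c)
  then have h: "(adj_in C E)\<^sup>*\<^sup>* a b" "b \<in> C" by auto
  from step(2) have c: "c \<in> V" "{b,c} \<in> E" "{b,c} \<notin> F" by (auto simp: adj_in_def)
  have "c \<in> C"
  proof (rule ccontr)
    assume "c \<notin> C"
    then have "{b,c} \<in> edges_between E C (V - C)"
      using h c unfolding edges_between_def by blast
    with assms(3) c show False by blast
  qed
  then have "adj_in C E b c" using h c by (simp add: adj_in_def)
  then show ?case using h \<open>c \<in> C\<close> by (meson rtranclp.rtrancl_into_rtrancl)
qed

lemma nonsep_trans:
  assumes "\<not> fin_separable V E x0 a" "\<not> fin_separable V E x0 b"
  shows "\<not> fin_separable V E a b"
proof
  assume "fin_separable V E a b"
  then obtain F where F: "F \<subseteq> E" "finite F" "b \<notin> comp_of V (E-F) a"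
    unfolding fin_separable_def by blast
  from assms(1) F have "a \<in> comp_of V (E-F) x0" unfolding fin_separable_def by blast
  then have a: "(adj_in V (E-F))\<^sup>*\<^sup>* x0 a" unfolding comp_of_def by blast
  from assms(2) F have "b \<in> comp_of V (E-F) x0" unfolding fin_separable_def by blast
  then have b: "b \<in> V" "(adj_in V (E-F))\<^sup>*\<^sup>* x0 b" unfolding comp_of_def by blast+
  have "(adj_in V (E-F))\<^sup>*\<^sup>* a b" using rtp_sym[OF a] b(2) by (meson rtranclp_trans)
  then have "b \<in> comp_of V (E-F) a" using b(1) unfolding comp_of_def by blast
  with F show False by blast
qed

lemma block_nonsep:
  assumes "X ` VT = omega_edge_blocks V E" "t \<in> VT" "a \<in> X t" "b \<in> X t"
  shows "\<not> fin_separable V E a b"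
proof -
  from assms have "X t \<in> omega_edge_blocks V E" by blast
  then obtain x0 where "X t = {y\<in>V. \<not> fin_separable V E x0 y}"
    unfolding omega_edge_blocks_def by blast
  then have "\<not> fin_separable V E x0 a" "\<not> fin_separable V E x0 b" using assms(3,4) by auto
  then show ?thesis by (rule nonsep_trans)
qed

lemma nonsep_path:
  "\<not> fin_separable V E a b \<Longrightarrow> F \<subseteq> E \<Longrightarrow> finite F \<Longrightarrow> b \<in> V \<and> (adj_in V (E-F))\<^sup>*\<^sup>* a b"
  unfolding fin_separable_def comp_of_def by blast

lemma exit_lemma:
  assumes "(adj_in VT ET)\<^sup>*\<^sup>* s u" "s \<in> C'"
  shows "u \<in> C' \<or> (\<exists>t1 t2. t1 \<in> C' \<and> t2 \<in> VT \<and> t2 \<notin> C' \<and> {t1,t2} \<in> ET \<and>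
             u \<in> comp_of VT (ET - {{t1,t2}}) t2)"
  using assms(1)
proof induction
  case base then show ?case using assms(2) by simp
next
  case (step u w)
  from step(2) have w: "u \<in> VT" "w \<in> VT" "{u,w} \<in> ET" by (auto simp: adj_in_def)
  show ?case
  proof (cases "w \<in> C'")
    case True then show ?thesis by simp
  next
    case wn: False
    show ?thesis
    proof (cases "u \<in> C'")
      case True
      have "w \<in> comp_of VT (ET - {{u,w}}) w" using w unfolding comp_of_def by simp
      then show ?thesis using True wn w by blast
    next
      case un: False
      with step(3) obtain t1 t2 where t: "t1 \<in> C'" "t2 \<in> VT" "t2 \<notin> C'" "{t1,t2} \<in> ET"
        "u \<in> comp_of VT (ET - {{t1,t2}}) t2" by blast
      have "{u,w} \<noteq> {t1,t2}" using t(1) un wn by (auto simp: doubleton_eq_iff)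
      then have "adj_in VT (ET - {{t1,t2}}) u w" using w by (simp add: adj_in_def)
      then have "w \<in> comp_of VT (ET - {{t1,t2}}) t2" using t(5) w
        unfolding comp_of_def by (auto intro: rtranclp.rtrancl_into_rtrancl)
      then show ?thesis using t by blast
    qed
  qed
qed

lemma part1:
  fixes V :: "'a set" and E :: "'a set set"
    and VT :: "'b set" and ET :: "'b set set" and X :: "'b \<Rightarrow> 'a set"
  assumes "graph V E"
    and "connected_in E V"
    and tcd: "tree_cut_decomposition V VT ET X"
    and fa: "finite_adhesion E VT ET X"
    and bl: "X ` VT = omega_edge_blocks V E"
    and ed: "\<And>t1 t2. {t1, t2} \<in> ET \<Longrightarrow> edges_between E (X t1) (X t2) \<noteq> {}"
    and reg: "region VT ET C'"
  shows "region V E (\<Union>t\<in>C'. X t)"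
proof -
  define U where "U = (\<Union>t\<in>C'. X t)"
  from tcd have gT: "graph VT ET" and cT: "connected_in ET VT"
    and ne: "\<forall>t\<in>VT. X t \<noteq> {}" and dj: "\<forall>s\<in>VT. \<forall>t\<in>VT. s \<noteq> t \<longrightarrow> X s \<inter> X t = {}"
    and cov: "(\<Union>t\<in>VT. X t) = V"
    unfolding tree_cut_decomposition_def tree_def by auto
  from reg have CV: "C' \<subseteq> VT" and cC: "connected_in ET C'"
    and fB: "finite (edges_between ET C' (VT - C'))" unfolding region_def by auto
  have UV: "U \<subseteq> V" using CV cov unfolding U_def by blast
  define B where "B = edges_between ET C' (VT - C')"
  define \<Phi> where "\<Phi> b = (\<Union>p\<in>b. \<Union>q\<in>b. if {p,q} \<in> ET then adhesion E VT ET X p q else {})" for b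
  have finPhi: "finite (\<Phi> b)" if "b \<in> B" for b
  proof -
    from that have "b \<in> ET" unfolding B_def edges_between_def by blast
    with gT obtain x y where "b = {x,y}" unfolding graph_def by blast
    then have "finite b" by simp
    moreover have "finite (if {p,q} \<in> ET then adhesion E VT ET X p q else {})" for p q
      using fa unfolding finite_adhesion_def by simp
    ultimately show ?thesis unfolding \<Phi>_def by (intro finite_UN_I) auto
  qed
  have bnd: "edges_between E U (V - U) \<subseteq> (\<Union>b\<in>B. \<Phi> b)"
  proof
    fix e assume "e \<in> edges_between E U (V - U)"
    then obtain x y where e: "e \<in> E" "x \<in> U" "y \<in> V" "y \<notin> U" "e = {x,y}"
      unfolding edges_between_def by blast
    from e obtain s where s: "s \<in> C'" "x \<in> X s" unfolding U_def by blast
    from e cov obtain u where u: "u \<in> VT" "y \<in> X u" by blast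
    have "u \<notin> C'" using u e unfolding U_def by blast
    have "s \<in> VT" using s CV by blast
    then have "(adj_in VT ET)\<^sup>*\<^sup>* s u" using cT u unfolding connected_in_def by blast
    from exit_lemma[OF this s(1)] \<open>u \<notin> C'\<close> obtain t1 t2 where
      t: "t1 \<in> C'" "t2 \<in> VT" "t2 \<notin> C'" "{t1,t2} \<in> ET" "u \<in> comp_of VT (ET - {{t1,t2}}) t2"
      by blast
    have "(adj_in C' ET)\<^sup>*\<^sup>* t1 s" using cC t(1) s(1) unfolding connected_in_def by blast
    moreover have "adj_in C' ET \<le> adj_in VT (ET - {{t1,t2}})"
      using CV t(3) unfolding adj_in_def by (auto simp: doubleton_eq_iff)
    ultimately have "(adj_in VT (ET - {{t1,t2}}))\<^sup>*\<^sup>* t1 s"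
      using rtranclp_mono[of "adj_in C' ET" "adj_in VT (ET - {{t1,t2}})"] by (simp add: le_fun_def)
    then have "s \<in> comp_of VT (ET - {{t1,t2}}) t1" using \<open>s \<in> VT\<close> unfolding comp_of_def by blast
    then have xin: "x \<in> (\<Union>t\<in>comp_of VT (ET - {{t1,t2}}) t1. X t)" using s(2) by blast
    have yin: "y \<in> (\<Union>t\<in>comp_of VT (ET - {{t1,t2}}) t2. X t)" using t(5) u(2) by blast
    have "e \<in> adhesion E VT ET X t1 t2" unfolding adhesion_def edges_between_def
      using e(1,5) xin yin by (intro CollectI conjI bexI) auto
    moreover have "{t1,t2} \<in> B" unfolding B_def edges_between_def
      using t(1-4) by auto
    moreover have "e \<in> \<Phi> {t1,t2}" unfolding \<Phi>_def using t(4) \<open>e \<in> adhesion E VT ET X t1 t2\<close>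
      by (intro UN_I[of t1] UN_I[of t2]) auto
    ultimately show "e \<in> (\<Union>b\<in>B. \<Phi> b)" by (intro UN_I[of "{t1,t2}"])
  qed
  have "finite (\<Union>b\<in>B. \<Phi> b)" using fB finPhi unfolding B_def by (intro finite_UN_I) auto
  then have finU: "finite (edges_between E U (V - U))"
    using finite_subset[OF bnd] by auto
  define F where "F = edges_between E U (V - U)"
  have FE: "F \<subseteq> E" unfolding F_def edges_between_def by blast
  have conn: "(adj_in U E)\<^sup>*\<^sup>* x y" if xy: "x \<in> U" "y \<in> U" for x y
  proof -
    define P where "P z = (z \<in> U \<and> (adj_in U E)\<^sup>*\<^sup>* x z)" for z
    have c1: "P b" if "P a" "b \<in> U" "\<not> fin_separable V E a b" for a b
    proof -
      from nonsep_path[OF that(3) FE] finU have "(adj_in V (E-F))\<^sup>*\<^sup>* a b"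
        unfolding F_def by blast
      from stay[OF this, of U] that(1) have "(adj_in U E)\<^sup>*\<^sup>* a b"
        unfolding P_def F_def by blast
      then show ?thesis using that(1,2) unfolding P_def by (meson rtranclp_trans)
    qed
    have c2: "\<forall>b\<in>X t. P b" if "t \<in> C'" "a \<in> X t" "P a" for t a
    proof
      fix b assume "b \<in> X t"
      have "t \<in> VT" using that CV by blast
      have "b \<in> U" using that \<open>b \<in> X t\<close> unfolding U_def by blast
      then show "P b" using c1[OF that(3) _ block_nonsep[OF bl \<open>t\<in>VT\<close> that(2) \<open>b\<in>X t\<close>]] by blast
    qed
    from xy obtain t0 where t0: "t0 \<in> C'" "x \<in> X t0" unfolding U_def by blast
    from xy obtain t1 where t1: "t1 \<in> C'" "y \<in> X t1" unfolding U_def by blast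
    have "P x" using xy unfolding P_def by simp
    then have Q0: "\<forall>b\<in>X t0. P b" using c2 t0 by blast
    have "(adj_in C' ET)\<^sup>*\<^sup>* t0 t1" using cC t0 t1 unfolding connected_in_def by blast
    have "\<forall>b\<in>X t1. P b"
    proof (rule ccontr)
      assume "\<not> (\<forall>b\<in>X t1. P b)"
      from rtp_exit[of "adj_in C' ET" t0 t1 "\<lambda>t. \<forall>b\<in>X t. P b", OF \<open>(adj_in C' ET)\<^sup>*\<^sup>* t0 t1\<close> Q0 this]
      obtain p q where pq: "adj_in C' ET p q" "\<forall>b\<in>X p. P b" "\<not> (\<forall>b\<in>X q. P b)" by blast
      from pq(1) have pq2: "p \<in> C'" "q \<in> C'" "{p,q} \<in> ET" unfolding adj_in_def by auto
      from ed[OF pq2(3)] obtain a b where ab: "{a,b} \<in> E" "a \<in> X p" "b \<in> X q"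
        unfolding edges_between_def by blast
      have abU: "a \<in> U" "b \<in> U" using ab pq2 unfolding U_def by blast+
      then have "adj_in U E a b" using ab by (simp add: adj_in_def)
      moreover have "P a" using pq(2) ab by blast
      ultimately have "P b" using abU unfolding P_def by (meson rtranclp.rtrancl_into_rtrancl)
      then have "\<forall>b\<in>X q. P b" using c2 pq2 ab by blast
      with pq(3) show False by blast
    qed
    then show ?thesis using t1 unfolding P_def by blast
  qed
  from cC obtain t where "t \<in> C'" unfolding connected_in_def by blast
  with ne CV obtain z where "z \<in> X t" by blast
  then have "U \<noteq> {}" using \<open>t \<in> C'\<close> unfolding U_def by blast
  then have "connected_in E U" using conn unfolding connected_in_def by blast
  then have "region V E U" unfolding region_def using UV finU by simp
  then show ?thesis unfolding U_def .
qed


lemma comp_self: "t \<in> S \<Longrightarrow> t \<in> comp_of S E t"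
  unfolding comp_of_def by simp

lemma comp_sub: "comp_of S E t \<subseteq> S"
  unfolding comp_of_def by blast

lemma comp_closed:
  assumes "k \<in> comp_of S E t" "adj_in S E k u" shows "u \<in> comp_of S E t"
proof -
  from assms(2) have "u \<in> S" unfolding adj_in_def by simp
  moreover from assms(1) have "(adj_in S E)\<^sup>*\<^sup>* t k" unfolding comp_of_def by simp
  then have "(adj_in S E)\<^sup>*\<^sup>* t u" using assms(2) by (rule rtranclp.rtrancl_into_rtrancl)
  ultimately show ?thesis unfolding comp_of_def by simp
qed

lemma comp_path:
  assumes "(adj_in S E)\<^sup>*\<^sup>* t k" shows "(adj_in (comp_of S E t) E)\<^sup>*\<^sup>* t k \<and> (k \<in> S \<longrightarrow> k \<in> comp_of S E t)"
  using assms
proof induction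
  case base then show ?case unfolding comp_of_def by simp
next
  case (step k w)
  have kS: "k \<in> S" using step(2) unfolding adj_in_def by simp
  then have kc: "k \<in> comp_of S E t" using step(3) by simp
  have wc: "w \<in> comp_of S E t" using comp_closed[OF kc step(2)] .
  have "adj_in (comp_of S E t) E k w" using kc wc step(2) unfolding adj_in_def by simp
  then show ?case using step(3) wc by (meson rtranclp.rtrancl_into_rtrancl)
qed

lemma comp_conn:
  assumes "t \<in> S" shows "connected_in E (comp_of S E t)"
  unfolding connected_in_def
proof (intro conjI ballI)
  show "comp_of S E t \<noteq> {}" using comp_self[OF assms] by blast
next
  fix x y assume xy: "x \<in> comp_of S E t" "y \<in> comp_of S E t"
  then have p: "(adj_in S E)\<^sup>*\<^sup>* t x" "(adj_in S E)\<^sup>*\<^sup>* t y" unfolding comp_of_def by simp_all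
  have a: "(adj_in (comp_of S E t) E)\<^sup>*\<^sup>* t x" using comp_path[OF p(1)] by simp
  have b: "(adj_in (comp_of S E t) E)\<^sup>*\<^sup>* t y" using comp_path[OF p(2)] by simp
  show "(adj_in (comp_of S E t) E)\<^sup>*\<^sup>* x y" using rtranclp_trans[OF rtp_sym[OF a] b] .
qed

lemma comp_eq:
  assumes "z \<in> comp_of S E t" shows "comp_of S E z = comp_of S E t"
proof -
  from assms have zt: "(adj_in S E)\<^sup>*\<^sup>* t z" unfolding comp_of_def by simp
  have tz: "(adj_in S E)\<^sup>*\<^sup>* z t" using rtp_sym[OF zt] .
  show ?thesis unfolding comp_of_def
    using zt tz by (auto intro: rtranclp_trans)
qed

lemma part2:
  fixes V :: "'a set" and E :: "'a set set"
    and VT :: "'b set" and ET :: "'b set set" and X :: "'b \<Rightarrow> 'a set"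
  assumes "graph V E"
    and "connected_in E V"
    and tcd: "tree_cut_decomposition V VT ET X"
    and fa: "finite_adhesion E VT ET X"
    and bl: "X ` VT = omega_edge_blocks V E"
    and ed: "\<And>t1 t2. {t1, t2} \<in> ET \<Longrightarrow> edges_between E (X t1) (X t2) \<noteq> {}"
    and reg: "region V E C"
  shows "\<exists>\<C>. finite \<C> \<and> (\<forall>C'\<in>\<C>. region VT ET C') \<and>
                 (\<forall>C1\<in>\<C>. \<forall>C2\<in>\<C>. C1 \<noteq> C2 \<longrightarrow> C1 \<inter> C2 = {}) \<and>
                 C = (\<Union>C'\<in>\<C>. \<Union>t\<in>C'. X t)"
proof -
  from tcd have gT: "graph VT ET" and cT: "connected_in ET VT"
    and ne: "\<forall>t\<in>VT. X t \<noteq> {}" and dj: "\<forall>s\<in>VT. \<forall>t\<in>VT. s \<noteq> t \<longrightarrow> X s \<inter> X t = {}"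
    and cov: "(\<Union>t\<in>VT. X t) = V"
    unfolding tree_cut_decomposition_def tree_def by auto
  from reg have CV: "C \<subseteq> V" and fC: "finite (edges_between E C (V - C))"
    unfolding region_def by auto
  define F where "F = edges_between E C (V - C)"
  have FE: "F \<subseteq> E" unfolding F_def edges_between_def by blast
  have dich: "b \<in> C" if "t \<in> VT" "a \<in> X t" "a \<in> C" "b \<in> X t" for t a b
  proof -
    have "\<not> fin_separable V E a b" by (rule block_nonsep[OF bl that(1,2,4)])
    from nonsep_path[OF this FE] fC have "(adj_in V (E-F))\<^sup>*\<^sup>* a b" unfolding F_def by blast
    from stay[OF this that(3)] show ?thesis unfolding F_def by blast
  qed
  define S where "S = {t\<in>VT. X t \<inter> C \<noteq> {}}"
  have SV: "S \<subseteq> VT" unfolding S_def by blast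
  have XS: "X t \<subseteq> C" if "t \<in> S" for t
  proof
    fix b assume "b \<in> X t"
    from that obtain a where "a \<in> X t" "a \<in> C" "t \<in> VT" unfolding S_def by blast
    then show "b \<in> C" using dich \<open>b \<in> X t\<close> by blast
  qed
  have Xout: "X t \<inter> C = {}" if "t \<in> VT" "t \<notin> S" for t
    using that unfolding S_def by blast
  have CS: "C = (\<Union>t\<in>S. X t)"
  proof
    show "C \<subseteq> (\<Union>t\<in>S. X t)"
    proof
      fix x assume "x \<in> C"
      with CV cov obtain t where "t \<in> VT" "x \<in> X t" by blast
      then have "t \<in> S" using \<open>x \<in> C\<close> unfolding S_def by blast
      then show "x \<in> (\<Union>t\<in>S. X t)" using \<open>x \<in> X t\<close> by blast
    qed
    show "(\<Union>t\<in>S. X t) \<subseteq> C" using XS by blast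
  qed
  define \<tau> where "\<tau> x = (THE t. t \<in> VT \<and> x \<in> X t)" for x
  have \<tau>eq: "\<tau> x = t" if "t \<in> VT" "x \<in> X t" for x t
    unfolding \<tau>_def
  proof (rule the_equality)
    show "t \<in> VT \<and> x \<in> X t" using that by simp
    fix s assume "s \<in> VT \<and> x \<in> X s"
    then show "s = t" using dj that by blast
  qed
  have bS: "edges_between ET S (VT - S) \<subseteq> (\<lambda>e. \<tau> ` e) ` edges_between E C (V - C)"
  proof
    fix f assume "f \<in> edges_between ET S (VT - S)"
    then obtain t1 t2 where f: "f \<in> ET" "t1 \<in> S" "t2 \<in> VT" "t2 \<notin> S" "f = {t1,t2}"
      unfolding edges_between_def by blast
    from ed f obtain e a b where ab: "e \<in> E" "a \<in> X t1" "b \<in> X t2" "e = {a,b}"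
      unfolding edges_between_def by blast
    have "t1 \<in> VT" using f SV by blast
    have "a \<in> C" using XS f ab by blast
    have "b \<notin> C" using Xout f ab by blast
    have "b \<in> V" using cov f ab by blast
    have "e \<in> edges_between E C (V - C)" unfolding edges_between_def
      using ab \<open>a \<in> C\<close> \<open>b \<notin> C\<close> \<open>b \<in> V\<close> by blast
    moreover have "\<tau> ` e = f" using ab f \<tau>eq[OF \<open>t1 \<in> VT\<close> ab(2)] \<tau>eq[OF f(3) ab(3)] by simp
    ultimately show "f \<in> (\<lambda>e. \<tau> ` e) ` edges_between E C (V - C)" by blast
  qed
  have finS: "finite (edges_between ET S (VT - S))"
    using finite_subset[OF bS] fC by blast
  define \<C> where "\<C> = comp_of S ET ` S"
  have bK: "edges_between ET K (VT - K) \<subseteq> edges_between ET S (VT - S)" if "K \<in> \<C>" for K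
  proof
    from that obtain t where t: "t \<in> S" "K = comp_of S ET t" unfolding \<C>_def by blast
    fix f assume "f \<in> edges_between ET K (VT - K)"
    then obtain k u where f: "f \<in> ET" "k \<in> K" "u \<in> VT" "u \<notin> K" "f = {k,u}"
      unfolding edges_between_def by blast
    have kS: "k \<in> S" using comp_sub[of S ET t] f(2) t(2) by blast
    have "u \<notin> S"
    proof
      assume "u \<in> S"
      then have "adj_in S ET k u" using kS f unfolding adj_in_def by simp
      then have "u \<in> K" using comp_closed[of k S ET t u] f(2) t(2) by simp
      with f show False by blast
    qed
    then show "f \<in> edges_between ET S (VT - S)" unfolding edges_between_def
      using f kS by blast
  qed
  have regK: "region VT ET K" if "K \<in> \<C>" for K
  proof -
    from that obtain t where t: "t \<in> S" "K = comp_of S ET t" unfolding \<C>_def by blast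
    have "K \<subseteq> VT" using t(2) comp_sub[of S ET t] SV by blast
    moreover have "connected_in ET K" using comp_conn[OF t(1)] t(2) by simp
    moreover have "finite (edges_between ET K (VT - K))"
      using finite_subset[OF bK[OF that] finS] .
    ultimately show ?thesis unfolding region_def by simp
  qed
  have disj: "K1 \<inter> K2 = {}" if "K1 \<in> \<C>" "K2 \<in> \<C>" "K1 \<noteq> K2" for K1 K2
  proof (rule ccontr)
    assume "K1 \<inter> K2 \<noteq> {}"
    then obtain z where z: "z \<in> K1" "z \<in> K2" by blast
    from that obtain t1 t2 where "K1 = comp_of S ET t1" "K2 = comp_of S ET t2" unfolding \<C>_def by blast
    then have "K1 = comp_of S ET z" "K2 = comp_of S ET z" using comp_eq[of z S ET t1] comp_eq[of z S ET t2] z by simp_all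
    with that show False by simp
  qed
  have un: "C = (\<Union>K\<in>\<C>. \<Union>t\<in>K. X t)"
  proof -
    have "(\<Union>K\<in>\<C>. K) = S"
    proof
      show "(\<Union>K\<in>\<C>. K) \<subseteq> S" unfolding \<C>_def using comp_sub[of S ET] by (simp add: UN_least)
      show "S \<subseteq> (\<Union>K\<in>\<C>. K)" unfolding \<C>_def
      proof
        fix t assume "t \<in> S"
        then show "t \<in> (\<Union>K\<in>comp_of S ET ` S. K)" using comp_self[OF \<open>t \<in> S\<close>] by blast
      qed
    qed
    have "(\<Union>K\<in>\<C>. \<Union>t\<in>K. X t) = (\<Union>t\<in>(\<Union>K\<in>\<C>. K). X t)" by (rule UN_UN_flatten[symmetric])
    also have "\<dots> = (\<Union>t\<in>S. X t)" using \<open>(\<Union>K\<in>\<C>. K) = S\<close> by simp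
    finally show ?thesis using CS by simp
  qed
  define \<C>1 where "\<C>1 = {K\<in>\<C>. edges_between ET K (VT - K) = {}}"
  define \<C>2 where "\<C>2 = {K\<in>\<C>. edges_between ET K (VT - K) \<noteq> {}}"
  have "\<C>1 \<subseteq> {VT}"
  proof
    fix K assume K: "K \<in> \<C>1"
    then have KC: "K \<in> \<C>" and nb: "edges_between ET K (VT - K) = {}" unfolding \<C>1_def by auto
    from KC obtain t where t: "t \<in> S" "K = comp_of S ET t" unfolding \<C>_def by blast
    have tK: "t \<in> K" using t(2) comp_self[OF t(1)] by simp
    have KV: "K \<subseteq> VT" using t(2) comp_sub[of S ET t] SV by blast
    have "VT \<subseteq> K"
    proof
      fix u assume "u \<in> VT"
      show "u \<in> K"
      proof (rule ccontr)
        assume "u \<notin> K"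
        have "t \<in> VT" using t SV by blast
        then have "(adj_in VT ET)\<^sup>*\<^sup>* t u" using cT \<open>u \<in> VT\<close> unfolding connected_in_def by blast
        from rtp_exit[of _ t u "\<lambda>x. x \<in> K", OF this tK \<open>u \<notin> K\<close>]
        obtain x y where xy: "adj_in VT ET x y" "x \<in> K" "y \<notin> K" by blast
        then have "{x,y} \<in> edges_between ET K (VT - K)" unfolding adj_in_def edges_between_def by blast
        with nb show False by simp
      qed
    qed
    with KV show "K \<in> {VT}" by simp
  qed
  then have f1: "finite \<C>1" using finite_subset by auto
  define g where "g K = (SOME e. e \<in> edges_between ET K (VT - K))" for K
  have gin: "g K \<in> edges_between ET K (VT - K)" if "K \<in> \<C>2" for K
  proof -
    from that have "\<exists>e. e \<in> edges_between ET K (VT - K)" unfolding \<C>2_def by blast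
    then show ?thesis unfolding g_def by (rule someI_ex)
  qed
  have gS: "g ` \<C>2 \<subseteq> edges_between ET S (VT - S)"
  proof
    fix f assume "f \<in> g ` \<C>2"
    then obtain K where K: "K \<in> \<C>2" "f = g K" by blast
    then have "K \<in> \<C>" unfolding \<C>2_def by simp
    then show "f \<in> edges_between ET S (VT - S)" using bK gin K by blast
  qed
  have "inj_on g \<C>2"
  proof (rule inj_onI)
    fix K1 K2 assume K: "K1 \<in> \<C>2" "K2 \<in> \<C>2" "g K1 = g K2"
    have KC: "K1 \<in> \<C>" "K2 \<in> \<C>" using K unfolding \<C>2_def by auto
    from gin[OF K(1)] obtain k1 u1 where e1: "k1 \<in> K1" "u1 \<notin> K1" "u1 \<in> VT" "g K1 = {k1,u1}"
      unfolding edges_between_def by blast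
    from gin[OF K(2)] obtain k2 u2 where e2: "k2 \<in> K2" "u2 \<notin> K2" "u2 \<in> VT" "g K2 = {k2,u2}"
      unfolding edges_between_def by blast
    have K1S: "K1 \<subseteq> S" using KC(1) comp_sub[of S ET] unfolding \<C>_def by blast
    have K2S: "K2 \<subseteq> S" using KC(2) comp_sub[of S ET] unfolding \<C>_def by blast
    have "g K1 \<in> edges_between ET S (VT - S)" using bK[OF KC(1)] gin[OF K(1)] by (rule subsetD)
    then obtain s1 v1 where s1: "s1 \<in> S" "v1 \<notin> S" "g K1 = {s1,v1}"
      unfolding edges_between_def by blast
    have "g K2 \<in> edges_between ET S (VT - S)" using bK[OF KC(2)] gin[OF K(2)] by (rule subsetD)
    then obtain s2 v2 where s2: "s2 \<in> S" "v2 \<notin> S" "g K2 = {s2,v2}"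
      unfolding edges_between_def by blast
    have k1S: "k1 \<in> S" using K1S e1(1) by blast
    have k2S: "k2 \<in> S" using K2S e2(1) by blast
    have "k1 = s1" using e1(4) s1 k1S by (auto simp: doubleton_eq_iff)
    moreover have "k2 = s2" using e2(4) s2 k2S by (auto simp: doubleton_eq_iff)
    moreover have "s1 = s2" using s1 s2 K(3) by (auto simp: doubleton_eq_iff)
    ultimately have "k1 = k2" by simp
    then have "K1 \<inter> K2 \<noteq> {}" using e1 e2 by blast
    then show "K1 = K2" using disj KC by blast
  qed
  moreover have "finite (g ` \<C>2)" using finite_subset[OF gS finS] .
  ultimately have f2: "finite \<C>2" using finite_imageD by blast
  have "\<C> = \<C>1 \<union> \<C>2" unfolding \<C>1_def \<C>2_def by blast
  have fC: "finite \<C>" unfolding \<open>\<C> = \<C>1 \<union> \<C>2\<close> using f1 f2 by (rule finite_UnI)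
  show ?thesis
  proof (intro exI[of _ \<C>] conjI ballI impI)
    show "finite \<C>" by (rule fC)
  next
    fix K assume "K \<in> \<C>" then show "region VT ET K" by (rule regK)
  next
    fix K1 K2 assume "K1 \<in> \<C>" "K2 \<in> \<C>" "K1 \<noteq> K2"
    then show "K1 \<inter> K2 = {}" by (rule disj)
  next
    show "C = (\<Union>K\<in>\<C>. \<Union>t\<in>K. X t)" by (rule un)
  qed
qed

theorem lemma2p5:
  fixes V :: "'a set" and E :: "'a set set"
    and VT :: "'b set" and ET :: "'b set set" and X :: "'b \<Rightarrow> 'a set"
  assumes "graph V E"
    and "connected_in E V"
    and "tree_cut_decomposition V VT ET X"
    and "finite_adhesion E VT ET X"
    and "X ` VT = omega_edge_blocks V E"
    and "\<And>t1 t2. {t1, t2} \<in> ET \<Longrightarrow> edges_between E (X t1) (X t2) \<noteq> {}"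
  shows "(\<forall>C'. region VT ET C' \<longrightarrow> region V E (\<Union>t\<in>C'. X t))
       \<and> (\<forall>C. region V E C \<longrightarrow>
            (\<exists>\<C>. finite \<C> \<and> (\<forall>C'\<in>\<C>. region VT ET C') \<and>
                 (\<forall>C1\<in>\<C>. \<forall>C2\<in>\<C>. C1 \<noteq> C2 \<longrightarrow> C1 \<inter> C2 = {}) \<and>
                 C = (\<Union>C'\<in>\<C>. \<Union>t\<in>C'. X t)))"
  using part1[OF assms] part2[OF assms] by blast

end
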